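(* Assume $g$ satisfies (Hg). Let $a\in(0,1)$, $A\in[a,1)$, $k>1$ and $l\in(1,k)$, and set $$d^*(a;l,A,k)=\frac{1}{(k-l)(1-\frac1l)}\max_{s\in[1-\frac aA,1]}\frac{-g(A(1-s);a)}{As}.$$ Then for every $d>d^*(a;l,A,k)$ there exists $\bar c<0$ such that $\mathcal I_{a,d,k}[\bar c,\Psi_{l,A}](\xi)\le0$ for all $\xi\in\mathbb R$.
   Context: $\mathcal I_{a,d,k}[c,\Phi](\xi):=-c\Phi'(\xi)-d\big(\Phi(\xi-1)-(k+1)\Phi(\xi)+k\Phi(\xi+1)\big)-g(\Phi(\xi);a)$. The ($C^1$) function $\Psi_{l,A}:\mathbb R\to\mathbb R$ is $$\Psi_{l,A}(\xi)=\begin{cases}A\big(1-l-\frac{\log l}{3}\big), & \xi\le-1-\frac1l,\\ A\,p_l(\xi), & -1-\frac1l<\xi\le-1,\\ A(1-l^{-\xi}), & \xi>-1,\end{cases}\qquad p_l(\xi)=\frac{\log l}{3}\big(l\xi+1+l\big)^3+1-l-\frac{\log l}{3}.$$ A function $g:\mathbb R\times[0,1]\to\mathbb R$, $(u,a)\mapsto g(u;a)$, satisfies (Hg) if it is $C^1$ and for every $a\in(0,1)$: $g(0;a)=g(a;a)=g(1;a)=0$, $g'(0;a)<0$, $g'(1;a)<0$, $g'(a;a)>0$ (where $g'=\partial_u g$), $g(v;a)>0$ for $v\in(-\infty,0)\cup(a,1)$ and $g(v;a)<0$ for $v\in(0,a)\cup(1,\infty)$. *)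

theory Defs
  imports "HOL-Analysis.Analysis"
begin

definition C1_on_strip :: "(real \<Rightarrow> real \<Rightarrow> real) \<Rightarrow> bool" where
  "C1_on_strip g \<longleftrightarrow>
     (\<exists>D :: real \<times> real \<Rightarrow> real \<times> real \<Rightarrow> real.
        (\<forall>p \<in> UNIV \<times> {0..1}.
           ((\<lambda>q. g (fst q) (snd q)) has_derivative D p) (at p within UNIV \<times> {0..1})) \<and>
        continuous_on (UNIV \<times> {0..1}) (\<lambda>p. D p (1, 0)) \<and>
        continuous_on (UNIV \<times> {0..1}) (\<lambda>p. D p (0, 1)))"

definition Hg :: "(real \<Rightarrow> real \<Rightarrow> real) \<Rightarrow> bool" where
  "Hg g \<longleftrightarrow> C1_on_strip g \<and>
     (\<forall>a. 0 < a \<and> a < 1 \<longrightarrow>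
        g 0 a = 0 \<and> g a a = 0 \<and> g 1 a = 0 \<and>
        deriv (\<lambda>u. g u a) 0 < 0 \<and> deriv (\<lambda>u. g u a) 1 < 0 \<and> deriv (\<lambda>u. g u a) a > 0 \<and>
        (\<forall>v. (v < 0 \<or> (a < v \<and> v < 1)) \<longrightarrow> g v a > 0) \<and>
        (\<forall>v. ((0 < v \<and> v < a) \<or> 1 < v) \<longrightarrow> g v a < 0))"

definition I_op :: "(real \<Rightarrow> real \<Rightarrow> real) \<Rightarrow> real \<Rightarrow> real \<Rightarrow> real \<Rightarrow> real \<Rightarrow> (real \<Rightarrow> real) \<Rightarrow> real \<Rightarrow> real" where
  "I_op g a d k c Phi xi =
     - c * deriv Phi xi - d * (Phi (xi - 1) - (k + 1) * Phi xi + k * Phi (xi + 1)) - g (Phi xi) a"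

definition p_poly :: "real \<Rightarrow> real \<Rightarrow> real" where
  "p_poly l xi = ln l / 3 * (l * xi + 1 + l) ^ 3 + 1 - l - ln l / 3"

definition Psi :: "real \<Rightarrow> real \<Rightarrow> real \<Rightarrow> real" where
  "Psi l A xi =
     (if xi \<le> -1 - 1 / l then A * (1 - l - ln l / 3)
      else if xi \<le> -1 then A * p_poly l xi
      else A * (1 - l powr (- xi)))"

text \<open>The paper writes a maximum over s in [1 - a/A, 1]; when A = a the
  quotient is 0/0 at s = 0 and the maximum is of its continuous extension. We take the
  supremum over the half-open interval (1 - a/A, 1], which agrees with that maximum.\<close>
definition dstar :: "(real \<Rightarrow> real \<Rightarrow> real) \<Rightarrow> real \<Rightarrow> real \<Rightarrow> real \<Rightarrow> real \<Rightarrow> real" where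
  "dstar g a l A k =
     1 / ((k - l) * (1 - 1 / l)) *
     (SUP s \<in> {1 - a / A<..1}. - g (A * (1 - s)) a / (A * s))"

end

theory Submission
  imports Defs
begin


lemma glue:
  fixes F fl fr :: "real \<Rightarrow> real"
  assumes d1: "(fl has_real_derivative D) (at b)" and d2: "(fr has_real_derivative D) (at b)"
    and e: "e > 0" and l: "\<And>y. b - e < y \<Longrightarrow> y \<le> b \<Longrightarrow> F y = fl y"
    and r: "\<And>y. b \<le> y \<Longrightarrow> y < b + e \<Longrightarrow> F y = fr y"
  shows "(F has_real_derivative D) (at b)"
proof -
  have L1: "((\<lambda>y. (fl y - fl b)/(y-b)) \<longlongrightarrow> D) (at_left b)"
    using d1 unfolding has_field_derivative_iff by (rule tendsto_mono[OF at_le, rotated]) auto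
  have R1: "((\<lambda>y. (fr y - fr b)/(y-b)) \<longlongrightarrow> D) (at_right b)"
    using d2 unfolding has_field_derivative_iff by (rule tendsto_mono[OF at_le, rotated]) auto
  have "eventually (\<lambda>y. y \<in> {b-e<..<b}) (at_left b)" using e by (intro eventually_at_left_real) auto
  hence EL: "eventually (\<lambda>y. (fl y - fl b)/(y-b) = (F y - F b)/(y-b)) (at_left b)"
    by eventually_elim (use l e in auto)
  have "eventually (\<lambda>y. y \<in> {b<..<b+e}) (at_right b)" using e by (intro eventually_at_right_real) auto
  hence ER: "eventually (\<lambda>y. (fr y - fr b)/(y-b) = (F y - F b)/(y-b)) (at_right b)"
    by eventually_elim (use r e in auto)
  show ?thesis unfolding has_field_derivative_iff filterlim_at_split
    using Lim_transform_eventually[OF L1 EL] Lim_transform_eventually[OF R1 ER] by auto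
qed

definition Psid :: "real \<Rightarrow> real \<Rightarrow> real \<Rightarrow> real" where
  "Psid l A x = (if x \<le> -1 - 1/l then 0 else if x \<le> -1 then A * (ln l * l * (l*x+1+l)^2)
     else A * (ln l * l powr (-x)))"

lemma Psi_hi: assumes "1 < l" "x \<ge> -1" shows "Psi l A x = A * (1 - l powr (-x))"
proof (cases "x = -1")
  case True
  have "-1 - 1/l < -1" using assms by simp
  then show ?thesis using True assms by (simp add: Psi_def p_poly_def)
next
  case False
  have "-1 - 1/l < -1" using assms by simp
  then have "\<not> x \<le> -1 - 1/l" "\<not> x \<le> -1" using False assms by linarith+
  then show ?thesis by (simp add: Psi_def)
qed

lemma Psi_lo: assumes "x \<le> -1 - 1/l" shows "Psi l A x = A * (1 - l - ln l / 3)"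
  using assms by (simp add: Psi_def)

lemma Psi_mid: assumes "-1 - 1/l < x" "x \<le> -1" shows "Psi l A x = A * p_poly l x"
  using assms by (simp add: Psi_def)

lemma Psi_deriv: assumes "1 < l" shows "(Psi l A has_real_derivative Psid l A x) (at x)"
proof -
  define f0 where "f0 = (\<lambda>x::real. A * (1 - l - ln l / 3))"
  define f1 where "f1 = (\<lambda>x. A * p_poly l x)"
  define f2 where "f2 = (\<lambda>x. A * (1 - l powr (-x)))"
  have d0: "(f0 has_real_derivative 0) (at y)" for y unfolding f0_def by simp
  have d1: "(f1 has_real_derivative A * (ln l * l * (l*y+1+l)^2)) (at y)" for y unfolding f1_def p_poly_def
    by (auto intro!: derivative_eq_intros simp: power2_eq_square)
  have d2: "(f2 has_real_derivative A * (ln l * l powr (-y))) (at y)" for y unfolding f2_def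
    by (auto intro!: derivative_eq_intros)
  have lp: "0 < 1/l" "1/l < 1" using assms by auto
  consider "x < -1 - 1/l" | "x = -1 - 1/l" | "-1 - 1/l < x \<and> x < -1" | "x = -1" | "x > -1" by linarith
  then show ?thesis
  proof cases
    case 1
    have "(f0 has_real_derivative 0) (at x)" by (rule d0)
    then have "(Psi l A has_real_derivative 0) (at x)"
      by (rule has_field_derivative_transform_within_open[where S="{..< -1 - 1/l}"])
         (use 1 in \<open>auto simp: f0_def Psi_def\<close>)
    then show ?thesis using 1 by (simp add: Psid_def)
  next
    case 2
    have "(Psi l A has_real_derivative 0) (at x)"
    proof (rule glue[where e="1/l" and fr=f1, OF d0])
      have "l*x+1+l = 0" using 2 assms by (simp add: field_simps)
      then show "(f1 has_real_derivative 0) (at x)" using d1[of x] by simp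
    qed (use 2 lp in \<open>auto simp: f0_def f1_def Psi_def p_poly_def field_simps\<close>)
    then show ?thesis using 2 by (simp add: Psid_def)
  next
    case 3
    have "(Psi l A has_real_derivative A * (ln l * l * (l*x+1+l)^2)) (at x)"
      by (rule has_field_derivative_transform_within_open[OF d1, where S="{-1-1/l<..< -1}"])
         (use 3 in \<open>auto simp: f1_def Psi_def\<close>)
    then show ?thesis using 3 by (simp add: Psid_def)
  next
    case 4
    have "(Psi l A has_real_derivative A * (ln l * l powr (-x))) (at x)"
    proof (rule glue[where e="1/l" and fl=f1, OF _ d2])
      show "(f1 has_real_derivative A * (ln l * l powr (-x))) (at x)" using d1[of x] 4 assms by simp
    qed (use 4 lp Psi_hi[OF assms] in \<open>auto simp: f2_def f1_def Psi_def\<close>)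
    then show ?thesis using 4 lp by (simp add: Psid_def)
  next
    case 5
    have "(Psi l A has_real_derivative A * (ln l * l powr (-x))) (at x)"
      by (rule has_field_derivative_transform_within_open[OF d2, where S="{-1<..}"])
         (use 5 Psi_hi[OF assms] in \<open>auto simp: f2_def\<close>)
    moreover have "\<not> x \<le> -1 - 1/l" using 5 lp by linarith
    ultimately show ?thesis using 5 by (simp add: Psid_def)
  qed
qed


lemma g_deriv:
  assumes "Hg g" "0 \<le> a" "a \<le> 1"
  shows "\<exists>D'. ((\<lambda>u. g u a) has_real_derivative D') (at u)"
proof -
  have "C1_on_strip g" using assms(1) unfolding Hg_def by (rule conjunct1)
  then obtain DD where hD: "\<forall>p\<in>UNIV \<times> {0..1}. ((\<lambda>q. g (fst q) (snd q)) has_derivative DD p) (at p within UNIV \<times> {0..1})"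
    unfolding C1_on_strip_def by blast
  have h1: "((\<lambda>x. (x,a)) has_derivative (\<lambda>h. (h,0))) (at u within UNIV)"
    by (rule has_derivative_Pair[OF has_derivative_ident has_derivative_const])
  have "((\<lambda>x. g (fst (x,a)) (snd (x,a))) has_derivative (\<lambda>y. DD (u,a) (y,0))) (at u within UNIV)"
    apply (rule has_derivative_in_compose2[OF _ _ _ h1, where t="UNIV \<times> {0..1}"])
    subgoal for x using hD by blast
    using assms(2,3) by auto
  then have h2: "((\<lambda>x. g x a) has_derivative (\<lambda>y. DD (u,a) (y,0))) (at u)" by simp
  then have "linear (\<lambda>y. DD (u,a) (y,0))" using has_derivative_linear by blast
  then have E: "DD (u,a) (y,0) = y * DD (u,a) (1,0)" for y
    using linear_cmul[of "\<lambda>y. DD (u,a) (y,0)" y 1] by simp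
  have eq: "(\<lambda>y. DD (u,a) (y,0)) = (*) (DD (u,a) (1,0))"
    by (rule ext) (subst E, rule mult.commute)
  have "((\<lambda>u. g u a) has_real_derivative DD (u,a) (1,0)) (at u)"
    unfolding has_field_derivative_def eq[symmetric] by (rule h2)
  then show ?thesis by blast
qed
lemma g_bound:
  assumes "Hg g" "0 < a" "a < 1"
  shows "\<exists>B. \<forall>v\<in>{0..<a}. g v a / (v - a) \<le> B"
proof -
  have der: "\<exists>D'. ((\<lambda>u. g u a) has_real_derivative D') (at u)" for u
    using g_deriv assms by auto
  have ga: "g a a = 0" using assms unfolding Hg_def by auto
  obtain Da where Da: "((\<lambda>u. g u a) has_real_derivative Da) (at a)" using der by blast
  define H where "H = (\<lambda>v. if v = a then Da else g v a / (v - a))"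
  have cont: "isCont H v" for v
  proof (cases "v = a")
    case True
    have "((\<lambda>y. (g y a - g a a) / (y - a)) \<longlongrightarrow> Da) (at a)"
      using Da unfolding has_field_derivative_iff by simp
    moreover have "eventually (\<lambda>y. (g y a - g a a) / (y - a) = H y) (at a)"
      unfolding eventually_at_filter H_def by (auto simp: ga)
    ultimately have "(H \<longlongrightarrow> Da) (at a)" by (rule Lim_transform_eventually)
    then show ?thesis using True by (simp add: isCont_def H_def)
  next
    case False
    have "eventually (\<lambda>y. y \<noteq> a) (nhds v)" using False
      by (intro t1_space_nhds) auto
    then have ev: "eventually (\<lambda>y. H y = g y a / (y - a)) (nhds v)"
      by eventually_elim (simp add: H_def)
    obtain D' where "((\<lambda>u. g u a) has_real_derivative D') (at v)" using der by blast
    then have "isCont (\<lambda>u. g u a) v" by (rule DERIV_isCont)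
    then have "isCont (\<lambda>y. g y a / (y - a)) v" using False
      by (intro continuous_intros) auto
    then show ?thesis using isCont_cong[OF ev] by simp
  qed
  have "\<exists>x\<in>{0..a}. \<forall>y\<in>{0..a}. H y \<le> H x"
    by (rule continuous_attains_sup) (use cont assms in \<open>auto intro: continuous_at_imp_continuous_on\<close>)
  then obtain x where hx: "\<forall>y\<in>{0..a}. H y \<le> H x" by blast
  have "\<forall>v\<in>{0..<a}. g v a / (v - a) \<le> H x"
  proof
    fix v assume "v \<in> {0..<a}"
    then have "v \<in> {0..a}" "v \<noteq> a" by auto
    with hx show "g v a / (v - a) \<le> H x" unfolding H_def by force
  qed
  then show ?thesis by blast
qed


lemma powr_convex_bound:
  fixes l e :: real assumes "0 < l" "0 \<le> e" "e \<le> 1"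
  shows "l powr e \<le> 1 + e * (l - 1)"
proof -
  have "exp ((1 - e) *\<^sub>R 0 + e *\<^sub>R ln l) \<le> (1 - e) * exp 0 + e * exp (ln l)"
    by (rule convex_onD[OF exp_convex]) (use assms in auto)
  then show ?thesis using assms by (simp add: powr_def algebra_simps)
qed

lemma powr_lower:
  fixes l u :: real assumes "0 < l"
  shows "1 + u * ln l \<le> l powr u"
  using exp_ge_add_one_self[of "u * ln l"] assms by (simp add: powr_def)

lemma Psi_ge:
  assumes "1 < l" "0 < A"
  shows "A * (1 - l - ln l / 3) \<le> Psi l A y"
proof -
  have L: "0 < ln l" using assms by simp
  consider "y \<le> -1 - 1/l" | "-1 - 1/l < y \<and> y \<le> -1" | "-1 < y" by linarith
  then show ?thesis
  proof cases
    case 1 then show ?thesis by (simp add: Psi_lo)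
  next
    case 2
    have "l * (-1 - 1/l) < l * y" using 2 assms by (intro mult_strict_left_mono) auto
    moreover have "l * (-1 - 1/l) = -l - 1" using assms by (simp add: field_simps)
    ultimately have "0 < l*y+1+l" by linarith
    then have "0 \<le> ln l / 3 * (l*y+1+l)^3" using L by simp
    then have "1 - l - ln l / 3 \<le> p_poly l y" unfolding p_poly_def by simp
    then show ?thesis using 2 assms by (simp add: Psi_mid)
  next
    case 3
    have "l powr (-y) < l powr 1" using 3 assms by (intro powr_less_mono) auto
    then have "l powr (-y) < l" using assms by simp
    then have "1 - l - ln l / 3 \<le> 1 - l powr (-y)" using L by linarith
    then have "A * (1 - l - ln l / 3) \<le> A * (1 - l powr (-y))" using assms by (intro mult_left_mono) auto
    then show ?thesis using 3 assms by (simp add: Psi_hi)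
  qed
qed

lemma Psi_m_bound:
  assumes "1 < l" "0 < A" "-1 < xi" "xi < 0"
  shows "A * (1 - l) - A * (ln l * l * (-xi)) \<le> Psi l A (xi - 1)"
proof -
  have L: "0 < ln l" using assms by simp
  have "xi - 1 \<le> -1" using assms by simp
  consider "xi - 1 \<le> -1 - 1/l" | "-1 - 1/l < xi - 1" by linarith
  then show ?thesis
  proof cases
    case 1
    then have "1/l \<le> -xi" by simp
    then have "1 \<le> l * (-xi)" using assms by (simp add: field_simps)
    then have "ln l * 1 \<le> ln l * (l * (-xi))" using L by (intro mult_left_mono) auto
    then have "ln l / 3 \<le> ln l * l * (-xi)" using L by (simp add: algebra_simps)
    then have "A * (ln l / 3) \<le> A * (ln l * l * (-xi))" using assms by (intro mult_left_mono) auto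
    then show ?thesis using 1 by (simp add: Psi_lo algebra_simps)
  next
    case 2
    define t where "t = l * xi + 1"
    have t1: "l*(xi-1)+1+l = t" unfolding t_def by (simp add: algebra_simps)
    have "l * (-1 - 1/l) < l * (xi - 1)" using 2 assms by (intro mult_strict_left_mono) auto
    moreover have "l * (-1 - 1/l) = -l - 1" using assms by (simp add: field_simps)
    ultimately have t0: "0 < t" using t1 by linarith
    have "t < 1" unfolding t_def using assms by (simp add: mult_pos_neg)
    have "t^3 \<le> t^2" "t^2 \<le> t" using t0 \<open>t<1\<close> by (simp_all add: power_decreasing_iff power_mono_iff power3_eq_cube power2_eq_square mult_le_cancel_right1)
    have f1: "1 - t^3 = (1-t)*(1+t+t^2)" by (simp add: power2_eq_square power3_eq_cube algebra_simps)
    have "1+t+t^2 \<le> 3" using \<open>t^2 \<le> t\<close> \<open>t<1\<close> by linarith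
    then have "(1-t)*(1+t+t^2) \<le> (1-t) * 3" using \<open>t<1\<close> by (intro mult_left_mono) auto
    then have "1 - t^3 \<le> 3 * (1 - t)" using f1 by simp
    then have "ln l * (1 - t^3) \<le> ln l * (3 * (1 - t))" using L by (intro mult_left_mono) auto
    moreover have "1 - t = l * (-xi)" unfolding t_def by simp
    ultimately have "ln l / 3 - ln l / 3 * t^3 \<le> ln l * l * (-xi)" by (simp add: algebra_simps)
    then have "A * (ln l / 3 - ln l / 3 * t^3) \<le> A * (ln l * l * (-xi))" using assms by (intro mult_left_mono) auto
    then show ?thesis using 2 \<open>xi - 1 \<le> -1\<close> t1 by (simp add: Psi_mid p_poly_def algebra_simps)
  qed
qed

theorem lemma6p2:
  fixes g :: "real \<Rightarrow> real \<Rightarrow> real" and a A k l d :: real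
  assumes "Hg g"
    and "0 < a" and "a < 1"
    and "a \<le> A" and "A < 1"
    and "1 < k"
    and "1 < l" and "l < k"
    and "d > dstar g a l A k"
  shows "\<exists>c < 0. \<forall>xi. I_op g a d k c (Psi l A) xi \<le> 0"
proof -
  have ha: "0 < a \<and> a < 1" using assms by simp
  have g0: "g 0 a = 0" and ga: "g a a = 0"
    and gpos: "\<And>v. v < 0 \<or> (a < v \<and> v < 1) \<Longrightarrow> g v a > 0"
    and gneg: "\<And>v. (0 < v \<and> v < a) \<or> 1 < v \<Longrightarrow> g v a < 0"
    using assms(1) ha unfolding Hg_def by blast+
  have A0: "0 < A" using assms by simp
  define L where "L = ln l"
  have L0: "0 < L" unfolding L_def using assms by simp
  have Ll: "L \<le> l - 1" unfolding L_def using ln_le_minus_one[of l] assms by simp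
  obtain B where hB: "\<forall>v\<in>{0..<a}. g v a / (v - a) \<le> B" using g_bound[OF assms(1-3)] by blast
  define f where "f = (\<lambda>s. - g (A * (1 - s)) a / (A * s))"
  define S where "S = {1 - a / A<..1}"
  have fB: "f s \<le> B" if "s \<in> S" for s
  proof -
    define v where "v = A * (1 - s)"
    have s1: "1 - a/A < s" "s \<le> 1" using that unfolding S_def by auto
    have "A * (1 - a/A) < A * s" using s1 A0 by (intro mult_strict_left_mono) auto
    moreover have "A * (1 - a/A) = A - a" using A0 by (simp add: field_simps)
    ultimately have "A - a < A * s" by linarith
    then have v1: "v < a" unfolding v_def by (simp add: algebra_simps)
    have v0: "0 \<le> v" unfolding v_def using s1 A0 by simp
    have gv: "g v a \<le> 0" using v0 v1 gneg[of v] g0 by (cases "v = 0") (auto simp: less_eq_real_def)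
    have As: "A * s = A - v" unfolding v_def by (simp add: algebra_simps)
    have "a - v \<le> A * s" using As assms by simp
    then have "- g v a / (A * s) \<le> - g v a / (a - v)" using v1 gv by (intro divide_left_mono) auto
    also have "\<dots> = g v a / (v - a)" by (simp add: divide_simps) (simp add: algebra_simps)
    also have "\<dots> \<le> B" using hB v0 v1 by auto
    finally show ?thesis unfolding f_def v_def by simp
  qed
  have bdd: "bdd_above (f ` S)" by (rule bdd_aboveI2[of _ _ B]) (rule fB)
  define M where "M = (SUP s\<in>S. f s)"
  have Mub: "f s \<le> M" if "s \<in> S" for s unfolding M_def using bdd that by (rule cSUP_upper2) simp
  have "1 \<in> S" unfolding S_def using assms A0 by simp
  then have M0: "0 \<le> M" using Mub[of 1] g0 unfolding f_def by simp
  define K where "K = (k - l) * (1 - 1 / l)"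
  have "0 < 1 - 1/l" using assms by simp
  then have K0: "0 < K" unfolding K_def using assms by simp
  have dst: "dstar g a l A k = M / K" unfolding dstar_def K_def M_def S_def f_def by simp
  define D where "D = d * K"
  have "M / K * K < d * K" using assms(9) dst K0 by (intro mult_strict_right_mono) auto
  then have DM: "M < D" unfolding D_def using K0 by simp
  have d0: "0 < d" using DM M0 K0 unfolding D_def by (metis order_le_less_trans zero_less_mult_iff not_less_iff_gr_or_eq)
  have p1: "0 < (D - M) / L" using DM L0 by simp
  have p2: "0 < 2 * d / (3 * l)" using d0 assms by simp
  define m where "m = min ((D - M) / L) (2 * d / (3 * l))"
  have m1: "m \<le> (D - M) / L" and m2: "m \<le> 2 * d / (3 * l)" and m0: "0 < m"
    unfolding m_def using p1 p2 by auto
  define c where "c = - m / 2"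
  have c0: "c < 0" unfolding c_def using m0 by simp
  have cL: "- c * L \<le> D - M"
  proof -
    have "- c \<le> (D - M) / L" unfolding c_def using m1 m0 by linarith
    then show ?thesis using L0 by (simp add: field_simps)
  qed
  have cl: "- c * l \<le> 2 * d / 3"
  proof -
    have "- c \<le> 2 * d / (3 * l)" unfolding c_def using m2 m0 by linarith
    then show ?thesis using assms by (simp add: field_simps)
  qed
  show ?thesis
  proof (intro exI[of _ c] conjI allI c0)
    fix xi
    have dv: "deriv (Psi l A) xi = Psid l A xi" by (rule DERIV_imp_deriv[OF Psi_deriv[OF assms(7)]])
    define Pm Pz Pp where "Pm = Psi l A (xi - 1)" and "Pz = Psi l A xi" and "Pp = Psi l A (xi + 1)"
    have Iu: "I_op g a d k c (Psi l A) xi = - c * Psid l A xi - d * (Pm - (k + 1) * Pz + k * Pp) - g Pz a"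
      unfolding I_op_def dv Pm_def Pz_def Pp_def by simp
    have lp: "1/l \<le> 1" "0 < 1/l" using assms by auto
    have dL: "L = ln l" by (simp add: L_def)
    consider "xi \<le> -1 - 1/l" | "-1 - 1/l < xi \<and> xi \<le> -1" | "-1 < xi \<and> xi < 0" | "0 \<le> xi" by linarith
    then show "I_op g a d k c (Psi l A) xi \<le> 0"
    proof cases
      case 1
      define C where "C = A * (1 - l - L / 3)"
      have Pz: "Pz = C" unfolding Pz_def C_def L_def using 1 by (rule Psi_lo)
      have Pm: "Pm = C" unfolding Pm_def C_def L_def using 1 lp by (intro Psi_lo) linarith
      have Pp: "C \<le> Pp" unfolding Pp_def C_def L_def using assms(7) A0 by (rule Psi_ge)
      have dz: "Psid l A xi = 0" using 1 by (simp add: Psid_def)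
      have "1 - l - L / 3 < 0" using assms L0 by simp
      then have "C < 0" unfolding C_def using A0 by (simp add: mult_pos_neg)
      then have gp: "g Pz a > 0" using gpos Pz by auto
      have eq: "Pm - (k + 1) * Pz + k * Pp = k * (Pp - C)" using Pz Pm by (simp add: algebra_simps)
      have "0 \<le> d * (k * (Pp - C))" using d0 assms Pp by simp
      then show ?thesis unfolding Iu dz eq using gp by simp
    next
      case 2
      define t where "t = l * xi + 1 + l"
      have "l * (-1 - 1/l) < l * xi" using 2 assms by (intro mult_strict_left_mono) auto
      moreover have "l * (-1 - 1/l) = -l - 1" using assms by (simp add: field_simps)
      ultimately have t0: "0 < t" unfolding t_def by linarith
      have "l * xi \<le> l * (-1)" using 2 assms by (intro mult_left_mono) auto
      then have t1: "t \<le> 1" unfolding t_def by simp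
      have t3: "t^3 \<le> t" proof -
        have "t^2 \<le> 1" using t0 t1 by (simp add: power_le_one)
        then have "t * t^2 \<le> t * 1" using t0 by (intro mult_left_mono) auto
        then show ?thesis by (simp add: power3_eq_cube power2_eq_square)
      qed
      have t31: "t^3 \<le> 1" using t3 t1 by linarith
      have t2: "t^2 \<le> t" proof -
        have "t * t \<le> t * 1" using t0 t1 by (intro mult_left_mono) auto
        then show ?thesis by (simp add: power2_eq_square)
      qed
      define E where "E = l powr (-(xi + 1))"
      define e where "e = -(xi + 1)"
      have e_eq: "e = (1 - t) / l" unfolding e_def t_def using assms by (simp add: field_simps)
      have e0: "0 \<le> e" unfolding e_def using 2 by simp
      have "1 * (1 - t) \<le> l * (1 - t)" using t1 assms by (intro mult_right_mono) auto
      then have e1: "e \<le> 1 - t" unfolding e_eq using assms by (simp add: divide_le_eq mult.commute)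
      have e2: "e \<le> 1" using e1 t0 by linarith
      have Eb: "E \<le> 1 + e * (l - 1)" unfolding E_def e_def[symmetric] using assms e0 e2 by (intro powr_convex_bound) auto
      have "(l - 1) * t \<le> (l - 1) * (1 - e)" using e1 assms by (intro mult_left_mono) auto
      then have lE: "(l - 1) * t \<le> l - E" using Eb by (simp add: algebra_simps)
      have Pz: "Pz = A * (L / 3 * t^3 + 1 - l - L / 3)" unfolding Pz_def using 2
        by (simp add: Psi_mid p_poly_def t_def L_def)
      have Pm: "Pm = A * (1 - l - L / 3)" unfolding Pm_def L_def using 2 lp by (intro Psi_lo) linarith
      have "-1 \<le> xi + 1" using 2 lp by linarith
      then have Pp: "Pp = A * (1 - E)" unfolding Pp_def E_def using assms by (intro Psi_hi) auto
      have dz: "Psid l A xi = A * (L * l * t^2)" using 2 by (simp add: Psid_def t_def L_def)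
      define Q where "Q = k * (l + L / 3 - E) - (k + 1) * (L / 3) * t^3"
      have Deq: "Pm - (k + 1) * Pz + k * Pp = A * Q" unfolding Pm Pz Pp Q_def by (simp add: algebra_simps)
      have q1: "(l - 1) * t \<le> k * (l - E)" proof -
        have "0 \<le> (l - 1) * t" using assms t0 by simp
        then have "0 \<le> l - E" using lE by linarith
        then have "(l - 1) * t * 1 \<le> (l - E) * k" using lE assms t0 by (intro mult_mono) auto
        then show ?thesis by (simp add: algebra_simps)
      qed
      have q2: "0 \<le> k * (L / 3) * (1 - t^3)" using assms L0 t31 by simp
      have q3: "L / 3 * t^3 \<le> (l - 1) * t / 3" proof -
        have "L * t^3 \<le> (l - 1) * t" using L0 Ll t3 t0 by (intro mult_mono) auto
        then show ?thesis by simp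
      qed
      have Qb: "2 / 3 * ((l - 1) * t) \<le> Q" proof -
        have "Q = k * (l - E) + k * (L / 3) * (1 - t^3) - L / 3 * t^3" unfolding Q_def by (simp add: field_simps)
        then show ?thesis using q1 q2 q3 by linarith
      qed
      have "d * (A * (2 / 3 * ((l - 1) * t))) \<le> d * (A * Q)" using Qb d0 A0 by (intro mult_left_mono) auto
      moreover have "- c * (A * (L * l * t^2)) \<le> 2 * d / 3 * (A * ((l - 1) * t))" proof -
        have "L * t^2 \<le> (l - 1) * t" using L0 Ll t2 t0 by (intro mult_mono) auto
        then have "(- c * l) * (A * (L * t^2)) \<le> (- c * l) * (A * ((l - 1) * t))"
          using c0 assms A0 by (intro mult_left_mono mult_nonneg_nonneg) auto
        also have "\<dots> \<le> 2 * d / 3 * (A * ((l - 1) * t))"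
          using cl A0 assms t0 by (intro mult_right_mono) auto
        finally show ?thesis by (simp add: algebra_simps)
      qed
      moreover have "g Pz a > 0" proof -
        have "L / 3 * t^3 \<le> L / 3" using t31 L0 by simp
        then have "L / 3 * t^3 + 1 - l - L / 3 < 0" using assms by simp
        then have "Pz < 0" unfolding Pz using A0 by (simp add: mult_pos_neg)
        then show ?thesis using gpos by auto
      qed
      ultimately show ?thesis unfolding Iu dz Deq by (simp add: algebra_simps)
    next
      case 3
      define u where "u = - xi"
      define P where "P = l powr u"
      have u0: "0 < u" "u < 1" unfolding u_def using 3 by auto
      have Pl: "1 + u * L \<le> P" unfolding P_def L_def using assms by (intro powr_lower) auto
      have P1: "1 < P" using Pl u0 L0 by (smt (verit) mult_pos_pos)
      have Pz: "Pz = A * (1 - P)" unfolding Pz_def P_def u_def using 3 assms by (intro Psi_hi) auto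
      have "l powr (-(xi + 1)) = l powr (u - 1)" unfolding u_def by simp
      also have "\<dots> = P / l" unfolding P_def using assms by (simp add: powr_diff)
      finally have Pp: "Pp = A * (1 - P / l)" unfolding Pp_def using 3 assms by (subst Psi_hi) auto
      have Pm: "A * (1 - l) - A * (L * l * u) \<le> Pm" unfolding Pm_def L_def u_def
        using Psi_m_bound[OF assms(7) A0] 3 by auto
      have n1: "\<not> xi \<le> -1 - 1/l" "\<not> xi \<le> -1" using 3 lp by linarith+
      have dz: "Psid l A xi = A * (L * P)" using n1 unfolding P_def u_def L_def Psid_def by simp
      have key: "A * (1 - l) - A * (L * l * u) - (k + 1) * (A * (1 - P)) + k * (A * (1 - P / l)) - A * K * P
          = A * l * (P - 1 - u * L)" unfolding K_def using assms by (simp add: field_simps)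
      have "0 \<le> A * l * (P - 1 - u * L)" using A0 assms Pl by simp
      then have Db: "A * K * P \<le> Pm - (k + 1) * Pz + k * Pp" using key Pm unfolding Pz Pp by linarith
      have "d * (A * K * P) \<le> d * (Pm - (k + 1) * Pz + k * Pp)" using Db d0 by (intro mult_left_mono) auto
      moreover have "g Pz a > 0" proof -
        have "Pz < 0" unfolding Pz using A0 P1 by (simp add: mult_pos_neg)
        then show ?thesis using gpos by auto
      qed
      moreover have "A * P * (- c * L - D) \<le> 0"
        using A0 P1 cL M0 by (intro mult_nonneg_nonpos) auto
      ultimately show ?thesis unfolding Iu dz D_def by (simp add: algebra_simps)
    next
      case 4
      define s where "s = l powr (-xi)"
      have s0: "0 < s" unfolding s_def using assms by simp
      have "l powr (-xi) \<le> l powr 0" using 4 assms by (intro powr_mono) auto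
      then have s1: "s \<le> 1" unfolding s_def using assms by simp
      have Pz: "Pz = A * (1 - s)" unfolding Pz_def s_def using 4 assms by (intro Psi_hi) auto
      have "l powr (-(xi - 1)) = l powr (1 + - xi)" by simp
      also have "\<dots> = l * s" unfolding s_def using assms powr_add[of l 1 "-xi"] by simp
      finally have Pm: "Pm = A * (1 - l * s)" unfolding Pm_def using 4 assms by (subst Psi_hi) auto
      have "l powr (-(xi + 1)) = l powr (- xi - 1)" by simp
      also have "\<dots> = s / l" unfolding s_def using assms by (simp add: powr_diff)
      finally have Pp: "Pp = A * (1 - s / l)" unfolding Pp_def using 4 assms by (subst Psi_hi) auto
      have n1: "\<not> xi \<le> -1 - 1/l" "\<not> xi \<le> -1" using 4 lp by linarith+
      have dz: "Psid l A xi = A * (L * s)" using n1 unfolding s_def L_def Psid_def by simp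
      have Deq: "Pm - (k + 1) * Pz + k * Pp = A * s * K" unfolding Pm Pz Pp K_def using assms
        by (simp add: field_simps)
      have Ieq: "I_op g a d k c (Psi l A) xi = A * s * (- c * L - D) - g (A * (1 - s)) a"
      proof -
        have "I_op g a d k c (Psi l A) xi = - c * (A * (L * s)) - d * (A * s * K) - g Pz a"
          by (simp only: Iu dz Deq)
        then show ?thesis unfolding Pz D_def by (simp add: algebra_simps)
      qed
      have As0: "0 < A * s" using A0 s0 by simp
      show ?thesis
      proof (cases "s \<in> S")
        case True
        have "f s \<le> M" using Mub True by blast
        then have h: "- (g (A * (1 - s)) a / (A * s)) \<le> M" unfolding f_def by simp
        have "- g (A * (1 - s)) a = (- (g (A * (1 - s)) a / (A * s))) * (A * s)" using A0 s0 by simp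
        also have "\<dots> \<le> M * (A * s)" using h As0 by (intro mult_right_mono) auto
        finally have "- g (A * (1 - s)) a \<le> M * (A * s)" .
        moreover have "A * s * (- c * L - D + M) \<le> 0"
          using As0 cL by (intro mult_nonneg_nonpos) auto
        ultimately show ?thesis unfolding Ieq by (simp add: algebra_simps)
      next
        case False
        then have "s \<le> 1 - a / A" unfolding S_def using s1 by auto
        then have "A * s \<le> A * (1 - a / A)" using A0 by (intro mult_left_mono) auto
        also have "\<dots> = A - a" using A0 by (simp add: field_simps)
        finally have v1: "a \<le> A * (1 - s)" by (simp add: algebra_simps)
        have v2: "A * (1 - s) < 1" using As0 assms by (simp add: algebra_simps)
        have "0 \<le> g (A * (1 - s)) a"
        proof (cases "A * (1 - s) = a")
          case True then show ?thesis using ga by simp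
        next
          case False then show ?thesis using gpos[of "A * (1 - s)"] v1 v2 by simp
        qed
        moreover have "A * s * (- c * L - D) \<le> 0"
          using As0 cL M0 by (intro mult_nonneg_nonpos) auto
        ultimately show ?thesis unfolding Ieq by simp
      qed
    qed
  qed
qed
end
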